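(* Let $a<b$, $c<d$, $C\in\mathbb{R}\setminus\{0\}$, $\Delta=\max\{b-a,d-c\}$, and let $\gamma\ge1$ be an integer. For a pair of real sequences $(p,q)=((p_n)_{n\ge0},(q_n)_{n\ge0})$ define $$\|(p,q)\|_\gamma=\max\Big\{\sup_{n\ge0}\Big|\frac{(n!)^2p_n}{(\gamma|C|\Delta)^n}\Big|,\ \sup_{n\ge0}\Big|\frac{(n!)^2q_n}{(\gamma|C|\Delta)^n}\Big|\Big\}.$$ Define $\Lambda(p,q)=(\tilde p,\tilde q)$ by $$\tilde p_n=\sum_{k=0}^{n}p_k\frac{(C(d-c))^{n-k}k!}{(n-k)!\,n!}+\sum_{k=1}^{\infty}q_k\frac{C^n(d-c)^{n+k}k!}{(n+k)!\,n!},\qquad \tilde q_n=\sum_{k=0}^{n}q_k\frac{(C(b-a))^{n-k}k!}{(n-k)!\,n!}+\sum_{k=1}^{\infty}p_k\frac{C^n(b-a)^{n+k}k!}{(n+k)!\,n!}.$$ Then $\Lambda$, viewed as a linear map from the space of pairs of sequences with finite $\|\cdot\|_\gamma$ to the space of pairs with finite $\|\cdot\|_{\gamma+1}$, is bounded, with operator norm at most $I_0(2\sqrt{\gamma|C|}\,\Delta)$; that is, $\|\Lambda(p,q)\|_{\gamma+1}\le I_0(2\sqrt{\gamma|C|}\,\Delta)\,\|(p,q)\|_\gamma$ whenever $\|(p,q)\|_\gamma<\infty$.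
   Context: $I_0$ is the zero-order modified Bessel function of the first kind, $I_0(2z)=\sum_{k\ge0}z^{2k}/(k!)^2$. The map $\Lambda$ sends the power-series coefficients of the boundary data $k(\cdot,c)$, $k(a,\cdot)$ of the Goursat problem $\partial^2k/\partial s\partial t=Ck$ on $[a,b]\times[c,d]$ to those of $k(\cdot,d)$, $k(b,\cdot)$. *)

theory Defs
  imports "HOL-Analysis.Analysis"
begin

definition bessel_I0 :: "real \<Rightarrow> real" where
  "bessel_I0 x = (\<Sum>k. (x / 2) ^ (2 * k) / (fact k) ^ 2)"

definition wterm :: "real \<Rightarrow> (nat \<Rightarrow> real) \<Rightarrow> nat \<Rightarrow> real" where
  "wterm w p n = \<bar>(fact n) ^ 2 * p n / w ^ n\<bar>"

definition wfinite :: "real \<Rightarrow> (nat \<Rightarrow> real) \<times> (nat \<Rightarrow> real) \<Rightarrow> bool" where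
  "wfinite w pq = (bdd_above (range (wterm w (fst pq))) \<and> bdd_above (range (wterm w (snd pq))))"

text \<open>The weighted norm ||(p,q)||_gamma, with w = gamma |C| Delta.\<close>
definition wnorm :: "real \<Rightarrow> (nat \<Rightarrow> real) \<times> (nat \<Rightarrow> real) \<Rightarrow> real" where
  "wnorm w pq = max (SUP n. wterm w (fst pq) n) (SUP n. wterm w (snd pq) n)"

definition Lambda :: "real \<Rightarrow> real \<Rightarrow> real \<Rightarrow> real \<Rightarrow> real \<Rightarrow>
    (nat \<Rightarrow> real) \<times> (nat \<Rightarrow> real) \<Rightarrow> (nat \<Rightarrow> real) \<times> (nat \<Rightarrow> real)" where
  "Lambda a b c d C pq =
    (\<lambda>n. (\<Sum>k=0..n. fst pq k * (C * (d - c)) ^ (n - k) * fact k / (fact (n - k) * fact n))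
         + (\<Sum>k. snd pq (k + 1) * C ^ n * (d - c) ^ (n + (k + 1)) * fact (k + 1)
                  / (fact (n + (k + 1)) * fact n)),
     \<lambda>n. (\<Sum>k=0..n. snd pq k * (C * (b - a)) ^ (n - k) * fact k / (fact (n - k) * fact n))
         + (\<Sum>k. fst pq (k + 1) * C ^ n * (b - a) ^ (n + (k + 1)) * fact (k + 1)
                  / (fact (n + (k + 1)) * fact n)))"

end

theory Submission
  imports Defs
begin

lemma fact_le_sum: "(fact j :: real) * fact n \<le> fact (n + j)"
proof -
  have "fact j * fact n dvd (fact (j + n) :: nat)" by (rule fact_fact_dvd_fact)
  then have "fact j * fact n \<le> (fact (n + j) :: nat)"
    by (simp add: add.commute dvd_imp_le)
  then show ?thesis by (metis of_nat_fact of_nat_le_iff of_nat_mult)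
qed

lemma termB:
  fixes Q C e D g M :: real
  assumes M: "0 \<le> M" and e: "0 < e" "e \<le> D" and g: "g \<ge> 0"
    and Q: "\<bar>Q\<bar> \<le> M * (g*\<bar>C\<bar>*D)^j / (fact j)^2"
  shows "\<bar>Q * C^n * e^(n+j) * fact j / (fact (n+j) * fact n)\<bar>
     \<le> M / (fact n)^2 * ((g+1)*\<bar>C\<bar>*D)^n * ((g*\<bar>C\<bar>*D^2)^j / (fact j)^2)"
proof -
  have D: "0 < D" using e by linarith
  have "\<bar>Q * C^n * e^(n+j) * fact j / (fact (n+j) * fact n)\<bar>
      = \<bar>Q\<bar> * (\<bar>C\<bar>^n * e^(n+j) * fact j / (fact (n+j) * fact n))"
    using e by (simp add: abs_mult power_abs)
  also have "\<dots> \<le> (M * (g*\<bar>C\<bar>*D)^j / (fact j)^2) * (\<bar>C\<bar>^n * D^(n+j) * fact j / (fact (n+j) * fact n))"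
    apply (rule mult_mono[OF Q])
      apply (rule divide_right_mono)
       apply (rule mult_right_mono)
        apply (rule mult_left_mono)
         apply (auto intro!: power_mono simp: e less_imp_le M g D)
    done
  also have "\<dots> = (M * (g*\<bar>C\<bar>*D)^j * \<bar>C\<bar>^n * D^(n+j)) / (fact j * fact (n+j) * fact n)"
    by (simp add: power2_eq_square field_simps)
  also have "\<dots> \<le> (M * (g*\<bar>C\<bar>*D)^j * \<bar>C\<bar>^n * D^(n+j)) / (fact j * fact j * fact n * fact n)"
    apply (rule divide_left_mono)
    using fact_le_sum[of j n] M g D apply (auto intro!: mult_right_mono simp: mult.assoc)
    done
  also have "\<dots> = M / (fact n)^2 * (\<bar>C\<bar>*D)^n * ((g*\<bar>C\<bar>*D^2)^j / (fact j)^2)"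
    by (simp add: power2_eq_square field_simps power_mult_distrib power_add)
  also have "\<dots> \<le> M / (fact n)^2 * ((g+1)*\<bar>C\<bar>*D)^n * ((g*\<bar>C\<bar>*D^2)^j / (fact j)^2)"
    apply (rule mult_right_mono)
     apply (rule mult_left_mono)
      apply (rule power_mono)
    using g D M mult_right_mono[of 1 "g+1" "\<bar>C\<bar>*D"] by (auto simp: mult.assoc)
  finally show ?thesis .
qed

lemma termA:
  fixes P C e D g M :: real
  assumes M: "0 \<le> M" and e: "0 < e" "e \<le> D" and g: "g \<ge> 0" and kn: "k \<le> n"
    and P: "\<bar>P\<bar> \<le> M * (g*\<bar>C\<bar>*D)^k / (fact k)^2"
  shows "\<bar>P * (C*e)^(n-k) * fact k / (fact (n-k) * fact n)\<bar>
     \<le> M / (fact n)^2 * (of_nat (n choose k) * (g*\<bar>C\<bar>*D)^k * (\<bar>C\<bar>*D)^(n-k))"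
proof -
  have D: "0 < D" using e by linarith
  have "\<bar>P * (C*e)^(n-k) * fact k / (fact (n-k) * fact n)\<bar>
      = \<bar>P\<bar> * ((\<bar>C\<bar>*e)^(n-k) * fact k / (fact (n-k) * fact n))"
    using e by (simp add: abs_mult power_abs)
  also have "\<dots> \<le> (M * (g*\<bar>C\<bar>*D)^k / (fact k)^2) * ((\<bar>C\<bar>*D)^(n-k) * fact k / (fact (n-k) * fact n))"
    apply (rule mult_mono[OF P])
      apply (rule divide_right_mono)
       apply (rule mult_right_mono)
        apply (auto intro!: power_mono mult_left_mono simp: e less_imp_le M g D)
    done
  also have "\<dots> = M / (fact n)^2 * ((fact n / (fact k * fact (n-k))) * (g*\<bar>C\<bar>*D)^k * (\<bar>C\<bar>*D)^(n-k))"
    by (simp add: power2_eq_square field_simps)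
  also have "\<dots> = M / (fact n)^2 * (of_nat (n choose k) * (g*\<bar>C\<bar>*D)^k * (\<bar>C\<bar>*D)^(n-k))"
    by (simp add: binomial_fact[OF kn])
  finally show ?thesis .
qed

lemma summable_bes:
  fixes x :: real assumes x: "0 \<le> x"
  shows "summable (\<lambda>j. x^j / (fact j)^2)"
proof (rule summable_comparison_test[OF _ summable_exp[of x]])
  show "\<exists>N. \<forall>n\<ge>N. norm (x ^ n / (fact n)\<^sup>2) \<le> inverse (fact n) * x ^ n"
  proof (intro exI allI impI)
    fix n :: nat
    have f: "(1::real) \<le> fact n" by simp
    have "x ^ n / (fact n)\<^sup>2 = (x^n / fact n) / fact n" by (simp add: power2_eq_square)
    also have "\<dots> \<le> x^n / fact n"
      using f x mult_left_mono[OF f, of "x^n"] by (simp add: divide_le_eq zero_le_divide_iff)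
    finally show "norm (x ^ n / (fact n)\<^sup>2) \<le> inverse (fact n) * x ^ n"
      using x by (simp add: field_simps)
  qed
qed

lemma key:
  fixes p q :: "nat \<Rightarrow> real" and C e D g M :: real
  assumes e: "0 < e" "e \<le> D" and g: "g \<ge> 0" and C: "C \<noteq> 0"
    and hp: "\<And>k. \<bar>p k\<bar> \<le> M * (g*\<bar>C\<bar>*D)^k / (fact k)^2"
    and hq: "\<And>k. \<bar>q k\<bar> \<le> M * (g*\<bar>C\<bar>*D)^k / (fact k)^2"
  shows "\<bar>(fact n)^2 * ((\<Sum>k=0..n. p k * (C * e) ^ (n - k) * fact k / (fact (n - k) * fact n))
         + (\<Sum>k. q (k + 1) * C ^ n * e ^ (n + (k + 1)) * fact (k + 1)
                  / (fact (n + (k + 1)) * fact n))) / ((g+1)*\<bar>C\<bar>*D)^n\<bar>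
      \<le> (\<Sum>j. (g*\<bar>C\<bar>*D^2)^j / (fact j)^2) * M"
proof -
  have D: "0 < D" using e by linarith
  have M: "0 \<le> M" using hp[of 0] by simp
  define W where "W = (g+1)*\<bar>C\<bar>*D"
  have W: "0 < W" unfolding W_def using g C D by simp
  define K where "K = M / (fact n)^2 * W^n"
  define u where "u = (\<lambda>j. (g*\<bar>C\<bar>*D^2)^j / (fact j)^2)"
  have su: "summable u" unfolding u_def by (rule summable_bes) (use g D in simp)
  have u0: "u 0 = 1" unfolding u_def by simp
  define A where "A = (\<Sum>k=0..n. p k * (C * e) ^ (n - k) * fact k / (fact (n - k) * fact n))"
  define t where "t = (\<lambda>k. q (k + 1) * C ^ n * e ^ (n + (k + 1)) * fact (k + 1)
                  / (fact (n + (k + 1)) * fact n))"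
  have hA: "\<bar>A\<bar> \<le> K"
  proof -
    have "\<bar>A\<bar> \<le> (\<Sum>k=0..n. \<bar>p k * (C * e) ^ (n - k) * fact k / (fact (n - k) * fact n)\<bar>)"
      unfolding A_def by (rule sum_abs)
    also have "\<dots> \<le> (\<Sum>k=0..n. M / (fact n)^2 * (of_nat (n choose k) * (g*\<bar>C\<bar>*D)^k * (\<bar>C\<bar>*D)^(n-k)))"
      by (rule sum_mono) (rule termA[OF M e g _ hp], simp)
    also have "\<dots> = M / (fact n)^2 * (g*\<bar>C\<bar>*D + \<bar>C\<bar>*D)^n"
      by (simp add: binomial_ring atLeast0AtMost sum_distrib_left)
    also have "\<dots> = K" unfolding K_def W_def by (simp add: algebra_simps)
    finally show ?thesis .
  qed
  have ht: "\<bar>t k\<bar> \<le> K * u (Suc k)" for k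
    unfolding t_def K_def u_def W_def
    using termB[OF M e g hq[of "k+1"], of n] by simp
  have su1: "summable (\<lambda>k. K * u (Suc k))"
    using su by (intro summable_mult) (simp add: summable_Suc_iff)
  have sat: "summable (\<lambda>k. \<bar>t k\<bar>)"
    by (rule summable_rabs_comparison_test[OF _ su1]) (use ht in blast)
  have hS: "\<bar>suminf t\<bar> \<le> K * (suminf u - 1)"
  proof -
    have "\<bar>suminf t\<bar> \<le> (\<Sum>k. \<bar>t k\<bar>)" by (rule summable_rabs[OF sat])
    also have "\<dots> \<le> (\<Sum>k. K * u (Suc k))" by (rule suminf_le[OF ht sat su1])
    also have "\<dots> = K * (\<Sum>k. u (Suc k))" using su by (simp add: suminf_mult summable_Suc_iff)
    also have "\<dots> = K * (suminf u - 1)" using suminf_split_head[OF su] u0 by simp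
    finally show ?thesis .
  qed
  have "\<bar>A + suminf t\<bar> \<le> K * suminf u" using hA hS using abs_triangle_ineq[of A "suminf t"] by (simp add: algebra_simps)
  then have "\<bar>(fact n)^2 * (A + suminf t) / W^n\<bar> \<le> (fact n)^2 / W^n * (K * suminf u)"
    using W by (simp add: abs_mult abs_divide mult_left_mono divide_right_mono)
  also have "\<dots> = suminf u * M" unfolding K_def using W by (simp add: field_simps)
  finally show ?thesis unfolding A_def t_def W_def u_def .
qed

theorem mainTheorem3:
  fixes a b c d C :: real and \<gamma> :: nat and p q :: "nat \<Rightarrow> real"
  assumes "a < b" and "c < d" and "C \<noteq> 0" and "\<gamma> \<ge> 1"
    and "wfinite (real \<gamma> * \<bar>C\<bar> * max (b - a) (d - c)) (p, q)"
  shows "wfinite (real (\<gamma> + 1) * \<bar>C\<bar> * max (b - a) (d - c)) (Lambda a b c d C (p, q))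
    \<and> wnorm (real (\<gamma> + 1) * \<bar>C\<bar> * max (b - a) (d - c)) (Lambda a b c d C (p, q))
      \<le> bessel_I0 (2 * sqrt (real \<gamma> * \<bar>C\<bar>) * max (b - a) (d - c))
         * wnorm (real \<gamma> * \<bar>C\<bar> * max (b - a) (d - c)) (p, q)"
proof -
  define D where "D = max (b - a) (d - c)"
  define g where "g = real \<gamma>"
  define w where "w = g * \<bar>C\<bar> * D"
  define M where "M = wnorm w (p, q)"
  have D: "0 < D" unfolding D_def using assms by auto
  have g: "g \<ge> 0" unfolding g_def by simp
  have w: "0 < w" unfolding w_def g_def using assms D by simp
  have bp: "bdd_above (range (wterm w p))" and bq: "bdd_above (range (wterm w q))"
    using assms(5) unfolding wfinite_def w_def g_def D_def by auto
  have bnd: "\<bar>r k\<bar> \<le> M * w^k / (fact k)^2"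
    if "wterm w r k \<le> M" for r k
  proof -
    have "(fact k)^2 * \<bar>r k\<bar> / w^k \<le> M" using that w unfolding wterm_def
      by (simp add: abs_mult abs_divide)
    then show ?thesis using w by (simp add: field_simps)
  qed
  have hp: "\<bar>p k\<bar> \<le> M * (g*\<bar>C\<bar>*D)^k / (fact k)^2" for k
  proof -
    have "wterm w p k \<le> (SUP n. wterm w p n)" by (rule cSUP_upper[OF _ bp]) simp
    then have "wterm w p k \<le> M" unfolding M_def wnorm_def by simp
    then show ?thesis using bnd unfolding w_def by blast
  qed
  have hq: "\<bar>q k\<bar> \<le> M * (g*\<bar>C\<bar>*D)^k / (fact k)^2" for k
  proof -
    have "wterm w q k \<le> (SUP n. wterm w q n)" by (rule cSUP_upper[OF _ bq]) simp
    then have "wterm w q k \<le> M" unfolding M_def wnorm_def by simp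
    then show ?thesis using bnd unfolding w_def by blast
  qed
  define I where "I = (\<Sum>j. (g*\<bar>C\<bar>*D^2)^j / (fact j)^2)"
  have I: "bessel_I0 (2 * sqrt (real \<gamma> * \<bar>C\<bar>) * D) = I"
  proof -
    have "(2 * sqrt (g * \<bar>C\<bar>) * D / 2) ^ (2 * k) = (g*\<bar>C\<bar>*D^2)^k" for k
    proof -
      have "(2 * sqrt (g * \<bar>C\<bar>) * D / 2) ^ (2 * k) = ((sqrt (g * \<bar>C\<bar>) * D)^2) ^ k"
        by (simp add: power_mult)
      also have "\<dots> = (g*\<bar>C\<bar>*D^2)^k" using g by (simp add: power_mult_distrib)
      finally show ?thesis .
    qed
    then show ?thesis unfolding bessel_I0_def I_def g_def by simp
  qed
  define W where "W = real (\<gamma> + 1) * \<bar>C\<bar> * D"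
  have WW: "W = (g+1)*\<bar>C\<bar>*D" unfolding W_def g_def by simp
  have e1: "0 < d - c" "d - c \<le> D" and e2: "0 < b - a" "b - a \<le> D"
    unfolding D_def using assms by auto
  have B1: "wterm W (fst (Lambda a b c d C (p, q))) n \<le> I * M" for n
    unfolding wterm_def Lambda_def WW I_def prod.sel
    by (rule key[OF e1 g assms(3) hp hq])
  have B2: "wterm W (snd (Lambda a b c d C (p, q))) n \<le> I * M" for n
    unfolding wterm_def Lambda_def WW I_def prod.sel
    by (rule key[OF e2 g assms(3) hq hp])
  have fin: "wfinite W (Lambda a b c d C (p, q))"
    unfolding wfinite_def using B1 B2 by (auto intro!: bdd_aboveI2)
  have nrm: "wnorm W (Lambda a b c d C (p, q)) \<le> I * M"
    unfolding wnorm_def using B1 B2 by (auto intro!: cSUP_least)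
  show ?thesis using fin nrm I unfolding W_def M_def w_def D_def g_def by simp
qed
end
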